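(* Let $(X,\mu)$ be a measure space with $\mu$ not identically zero. For $i=1,\dots,n$ let $1<p_i<\infty$ with $\sum_{i=1}^n p_i^{-1}=1$, and let $0\le f_i\in L^{p_i}(\mu)$ with $\|f_i\|_{p_i}>0$. Let $p_{\min}^{-1}=\min\{p_1^{-1},\dots,p_n^{-1}\}$, $p_{\max}^{-1}=\max\{p_1^{-1},\dots,p_n^{-1}\}$, and $$R:=\frac{\int\prod_{i=1}^n f_i^{p_i/n}\,d\mu}{\prod_{i=1}^n\|f_i\|_{p_i}^{p_i/n}}.$$ Then $$\prod_{i=1}^n\|f_i\|_{p_i}\left(1-np^{-1}_{\max}(1-R)\right)\le\Big\|\prod_{i=1}^n f_i\Big\|_1\le\prod_{i=1}^n\|f_i\|_{p_i}\left(1-np^{-1}_{\min}(1-R)\right).$$ *)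

theory Defs
  imports "HOL-Analysis.Analysis"
begin

definition Lp_norm :: "'a measure \<Rightarrow> real \<Rightarrow> ('a \<Rightarrow> real) \<Rightarrow> real" where
  "Lp_norm M p f = (\<integral>x. \<bar>f x\<bar> powr p \<partial>M) powr (1 / p)"

definition in_Lp :: "'a measure \<Rightarrow> real \<Rightarrow> ('a \<Rightarrow> real) \<Rightarrow> bool" where
  "in_Lp M p f \<longleftrightarrow> f \<in> borel_measurable M \<and> integrable M (\<lambda>x. \<bar>f x\<bar> powr p)"

end

theory Submission
  imports Defs
begin

lemma wamgm:
  fixes w x :: "'b \<Rightarrow> real"
  assumes fin: "finite S" and sw: "sum w S = 1" and w0: "\<And>i. i \<in> S \<Longrightarrow> w i \<ge> 0"
    and xp: "\<And>i. i \<in> S \<Longrightarrow> x i > 0"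
  shows "(\<Prod>i\<in>S. x i powr w i) \<le> (\<Sum>i\<in>S. w i * x i)"
proof -
  have ne: "S \<noteq> {}" using sw by auto
  have c: "(\<Sum>i\<in>S. w i * ln (x i)) \<le> ln (\<Sum>i\<in>S. w i *\<^sub>R x i)"
    by (rule concave_on_sum[OF fin ne ln_concave sw]) (use w0 xp in auto)
  have pos: "0 < (\<Sum>i\<in>S. w i * x i)"
  proof -
    obtain j where j: "j \<in> S" "w j \<noteq> 0" using sw by (metis sum.neutral zero_neq_one)
    have "w j > 0" using w0[OF j(1)] j(2) by (metis less_eq_real_def)
    show ?thesis
    proof (rule sum_pos2[OF fin j(1)])
      show "0 < w j * x j" using \<open>w j > 0\<close> xp[OF j(1)] by (rule mult_pos_pos)
      show "\<And>i. i \<in> S \<Longrightarrow> 0 \<le> w i * x i" using w0 xp by (meson less_imp_le mult_nonneg_nonneg)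
    qed
  qed
  have "exp (\<Sum>i\<in>S. w i * ln (x i)) \<le> exp (ln (\<Sum>i\<in>S. w i * x i))"
    using c by simp
  also have "\<dots> = (\<Sum>i\<in>S. w i * x i)" using pos by (rule exp_ln)
  finally have e: "exp (\<Sum>i\<in>S. w i * ln (x i)) \<le> (\<Sum>i\<in>S. w i * x i)" .
  have "exp (\<Sum>i\<in>S. w i * ln (x i)) = (\<Prod>i\<in>S. exp (w i * ln (x i)))"
    using fin by (rule exp_sum)
  also have "\<dots> = (\<Prod>i\<in>S. x i powr w i)"
  proof (rule prod.cong[OF refl])
    fix i assume "i \<in> S"
    then have "x i \<noteq> 0" using xp[of i] by linarith
    then show "exp (w i * ln (x i)) = x i powr w i" by (simp add: powr_def)
  qed
  finally show ?thesis using e by simp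
qed

lemma wamgm2:
  fixes v x :: "'b \<Rightarrow> real"
  assumes fin: "finite S" and sw: "l + sum v S = 1" and l0: "l \<ge> 0" and v0: "\<And>i. i \<in> S \<Longrightarrow> v i \<ge> 0"
    and yp: "y > 0" and xp: "\<And>i. i \<in> S \<Longrightarrow> x i > 0"
  shows "y powr l * (\<Prod>i\<in>S. x i powr v i) \<le> l * y + (\<Sum>i\<in>S. v i * x i)"
proof -
  define W where "W = (\<lambda>z. case z of None \<Rightarrow> l | Some i \<Rightarrow> v i)"
  define X where "X = (\<lambda>z. case z of None \<Rightarrow> y | Some i \<Rightarrow> x i)"
  define T where "T = insert None (Some ` S)"
  have fT: "finite T" using fin by (simp add: T_def)
  have sumT: "\<And>g. sum g T = g None + (\<Sum>i\<in>S. g (Some i))"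
    unfolding T_def using fin by (subst sum.insert) (auto simp: sum.reindex)
  have prodT: "\<And>g. prod g T = g None * (\<Prod>i\<in>S. g (Some i))"
    unfolding T_def using fin by (subst prod.insert) (auto simp: prod.reindex)
  have "(\<Prod>z\<in>T. X z powr W z) \<le> (\<Sum>z\<in>T. W z * X z)"
  proof (rule wamgm[OF fT])
    show "sum W T = 1" using sw by (simp add: sumT W_def)
  qed (use l0 v0 yp xp in \<open>auto simp: T_def W_def X_def\<close>)
  then show ?thesis by (simp add: sumT prodT W_def X_def)
qed
lemma refined:
  fixes w a :: "'b \<Rightarrow> real"
  assumes fin: "finite S" and ne: "S \<noteq> {}" and sw: "sum w S = 1"
    and wp: "\<And>i. i \<in> S \<Longrightarrow> w i > 0" and a0: "\<And>i. i \<in> S \<Longrightarrow> a i \<ge> 0"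
    and wmin: "\<And>i. i \<in> S \<Longrightarrow> wmin \<le> w i" and wmin0: "0 \<le> wmin"
    and wmax: "\<And>i. i \<in> S \<Longrightarrow> w i \<le> wmax"
  shows "real (card S) * wmin * ((\<Sum>i\<in>S. a i) / real (card S) - (\<Prod>i\<in>S. a i powr (1 / real (card S))))
           \<le> (\<Sum>i\<in>S. w i * a i) - (\<Prod>i\<in>S. a i powr w i)
       \<and> (\<Sum>i\<in>S. w i * a i) - (\<Prod>i\<in>S. a i powr w i)
           \<le> real (card S) * wmax * ((\<Sum>i\<in>S. a i) / real (card S) - (\<Prod>i\<in>S. a i powr (1 / real (card S))))"
proof -
  define k where "k = real (card S)"
  have kp: "k > 0" using fin ne by (simp add: k_def card_gt_0_iff)
  define G where "G = (\<Prod>i\<in>S. a i powr (1 / k))"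
  define P where "P = (\<Prod>i\<in>S. a i powr w i)"
  define SA where "SA = (\<Sum>i\<in>S. a i)"
  define SW where "SW = (\<Sum>i\<in>S. w i * a i)"
  obtain j where j: "j \<in> S" using ne by blast
  have wmaxp: "wmax > 0" using wp[OF j] wmax[OF j] by simp
  have kA: "k * (SA / k) = SA" using kp by simp
  have lowsum: "wmin * SA \<le> SW"
    unfolding SA_def SW_def sum_distrib_left
    by (rule sum_mono) (use wmin a0 in \<open>simp add: mult_right_mono\<close>)
  have upsum: "SW \<le> wmax * SA"
    unfolding SA_def SW_def sum_distrib_left
    by (rule sum_mono) (use wmax a0 in \<open>simp add: mult_right_mono\<close>)
  have "k * wmin * (SA / k - G) \<le> SW - P \<and> SW - P \<le> k * wmax * (SA / k - G)"
  proof (cases "\<exists>i\<in>S. a i = 0")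
    case True
    then have "G = 0" "P = 0" using fin by (auto simp: G_def P_def)
    then show ?thesis using kA lowsum upsum kp
      by (simp add: algebra_simps)
  next
    case False
    then have ap: "\<And>i. i \<in> S \<Longrightarrow> a i > 0" using a0 by force
    have Gp: "G > 0" unfolding G_def using ap by (intro prod_pos) (metis less_irrefl powr_gt_zero)
    have Pp: "P > 0" unfolding P_def using ap by (intro prod_pos) (metis less_irrefl powr_gt_zero)
    have "G powr (k * wmin) * (\<Prod>i\<in>S. a i powr (w i - wmin)) \<le> k * wmin * G + (\<Sum>i\<in>S. (w i - wmin) * a i)"
    proof (rule wamgm2[OF fin _ _ _ Gp ap])
      show "k * wmin + sum (\<lambda>i. w i - wmin) S = 1"
        using sw by (simp add: sum_subtractf k_def)
    qed (use wmin0 kp wmin in auto)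
    moreover have "G powr (k * wmin) * (\<Prod>i\<in>S. a i powr (w i - wmin)) = P"
    proof -
      have "G powr (k * wmin) = (\<Prod>i\<in>S. a i powr wmin)"
        unfolding G_def prod_powr_distrib powr_powr using kp by simp
      then show ?thesis
        unfolding P_def by (simp add: prod.distrib[symmetric] powr_add[symmetric])
    qed
    moreover have "(\<Sum>i\<in>S. (w i - wmin) * a i) = SW - wmin * SA"
      by (simp add: SW_def SA_def left_diff_distrib sum_subtractf sum_distrib_left)
    ultimately have low: "k * wmin * (SA / k - G) \<le> SW - P"
      using kA kp by (simp add: algebra_simps)
    have "P powr (1 / (k * wmax)) * (\<Prod>i\<in>S. a i powr ((wmax - w i) / (k * wmax)))
        \<le> 1 / (k * wmax) * P + (\<Sum>i\<in>S. ((wmax - w i) / (k * wmax)) * a i)"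
    proof (rule wamgm2[OF fin _ _ _ Pp ap])
      have "sum (\<lambda>i. (wmax - w i) / (k * wmax)) S = (k * wmax - 1) / (k * wmax)"
        using sw by (simp add: sum_subtractf k_def sum_divide_distrib[symmetric])
      then show "1 / (k * wmax) + sum (\<lambda>i. (wmax - w i) / (k * wmax)) S = 1"
        using kp wmaxp by (simp add: field_simps)
    qed (use wmaxp kp wmax in auto)
    moreover have "P powr (1 / (k * wmax)) * (\<Prod>i\<in>S. a i powr ((wmax - w i) / (k * wmax))) = G"
    proof -
      have "P powr (1 / (k * wmax)) = (\<Prod>i\<in>S. a i powr (w i / (k * wmax)))"
        unfolding P_def prod_powr_distrib powr_powr by simp
      then show ?thesis
        unfolding G_def using kp wmaxp
        by (simp add: prod.distrib[symmetric] powr_add[symmetric] add_divide_distrib[symmetric])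
    qed
    moreover have "(\<Sum>i\<in>S. ((wmax - w i) / (k * wmax)) * a i) = (wmax * SA - SW) / (k * wmax)"
      by (simp add: SW_def SA_def left_diff_distrib sum_subtractf sum_distrib_left sum_divide_distrib[symmetric] diff_divide_distrib flip: sum_distrib_left)
    ultimately have "G \<le> (P + wmax * SA - SW) / (k * wmax)"
      by (simp add: add_divide_distrib diff_divide_distrib)
    then have "k * wmax * G \<le> P + wmax * SA - SW"
      using kp wmaxp by (simp add: field_simps)
    then have up: "SW - P \<le> k * wmax * (SA / k - G)"
      using kA kp by (simp add: algebra_simps)
    show ?thesis using low up by simp
  qed
  then show ?thesis by (simp add: k_def G_def P_def SA_def SW_def)
qed

lemma wamgm0:
  fixes w x :: "'b \<Rightarrow> real"
  assumes fin: "finite S" and sw: "sum w S = 1" and w0: "\<And>i. i \<in> S \<Longrightarrow> w i \<ge> 0"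
    and x0: "\<And>i. i \<in> S \<Longrightarrow> x i \<ge> 0"
  shows "(\<Prod>i\<in>S. x i powr w i) \<le> (\<Sum>i\<in>S. w i * x i)"
proof (cases "\<exists>i\<in>S. x i = 0")
  case True
  then have "(\<Prod>i\<in>S. x i powr w i) = 0" using fin by auto
  moreover have "(\<Sum>i\<in>S. w i * x i) \<ge> 0" using w0 x0 by (intro sum_nonneg) simp
  ultimately show ?thesis by simp
next
  case False
  have xp: "\<And>i. i \<in> S \<Longrightarrow> x i > 0"
  proof -
    fix i assume i: "i \<in> S"
    have "x i \<noteq> 0" using False i by blast
    then show "x i > 0" using x0[OF i] by linarith
  qed
  show ?thesis by (rule wamgm[OF fin sw w0 xp])
qed

theorem theorem3p3:
  fixes M :: "'a measure" and n :: nat and p :: "nat \<Rightarrow> real" and f :: "nat \<Rightarrow> 'a \<Rightarrow> real"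
  assumes nonzero: "emeasure M (space M) \<noteq> 0"
    and p_gt: "\<And>i. i \<in> {1..n} \<Longrightarrow> 1 < p i"
    and p_sum: "(\<Sum>i=1..n. 1 / p i) = 1"
    and f_Lp: "\<And>i. i \<in> {1..n} \<Longrightarrow> in_Lp M (p i) (f i)"
    and f_nonneg: "\<And>i x. i \<in> {1..n} \<Longrightarrow> x \<in> space M \<Longrightarrow> 0 \<le> f i x"
    and f_norm_pos: "\<And>i. i \<in> {1..n} \<Longrightarrow> Lp_norm M (p i) (f i) > 0"
  defines "pmin_inv \<equiv> Min ((\<lambda>i. 1 / p i) ` {1..n})"
    and "pmax_inv \<equiv> Max ((\<lambda>i. 1 / p i) ` {1..n})"
    and "R \<equiv> (\<integral>x. (\<Prod>i=1..n. f i x powr (p i / real n)) \<partial>M)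
              / (\<Prod>i=1..n. Lp_norm M (p i) (f i) powr (p i / real n))"
  shows "(\<Prod>i=1..n. Lp_norm M (p i) (f i)) * (1 - real n * pmax_inv * (1 - R))
           \<le> Lp_norm M 1 (\<lambda>x. \<Prod>i=1..n. f i x)
         \<and> Lp_norm M 1 (\<lambda>x. \<Prod>i=1..n. f i x)
           \<le> (\<Prod>i=1..n. Lp_norm M (p i) (f i)) * (1 - real n * pmin_inv * (1 - R))"
proof -
  define I where "I = {1..n}"
  have finI: "finite I" by (simp add: I_def)
  have cardI: "card I = n" by (simp add: I_def)
  have n1: "n \<ge> 1" using p_sum by (cases n) auto
  have neI: "I \<noteq> {}" using n1 by (simp add: I_def)
  define N where "N i = Lp_norm M (p i) (f i)" for i
  define w where "w i = 1 / p i" for i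
  define a where "a i x = (f i x / N i) powr p i" for i x
  have Np: "\<And>i. i \<in> I \<Longrightarrow> N i > 0" using f_norm_pos by (simp add: N_def I_def)
  have pp: "\<And>i. i \<in> I \<Longrightarrow> p i > 1" using p_gt by (simp add: I_def)
  have wp: "w i > 0" if "i \<in> I" for i
  proof -
    have "p i > 0" using pp[OF that] by simp
    then show ?thesis by (simp add: w_def)
  qed
  have sw: "sum w I = 1" using p_sum by (simp add: w_def I_def)
  have fnn: "\<And>i x. i \<in> I \<Longrightarrow> x \<in> space M \<Longrightarrow> 0 \<le> f i x" using f_nonneg by (simp add: I_def)
  have meas: "\<And>i. i \<in> I \<Longrightarrow> f i \<in> borel_measurable M"
    using f_Lp by (simp add: in_Lp_def I_def)
  have intf: "\<And>i. i \<in> I \<Longrightarrow> integrable M (\<lambda>x. \<bar>f i x\<bar> powr p i)"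
    using f_Lp by (simp add: in_Lp_def I_def)
  have NpowP: "N i powr p i = (\<integral>x. \<bar>f i x\<bar> powr p i \<partial>M)" if "i \<in> I" for i
  proof -
    have "(\<integral>x. \<bar>f i x\<bar> powr p i \<partial>M) \<ge> 0" by (intro Bochner_Integration.integral_nonneg) simp
    then show ?thesis using pp[OF that]
      by (simp add: N_def Lp_norm_def powr_powr)
  qed
  have a_eq: "a i x = \<bar>f i x\<bar> powr p i / N i powr p i" if "i \<in> I" "x \<in> space M" for i x
    using fnn[OF that] by (simp add: a_def powr_divide)
  have a0: "\<And>i x. a i x \<ge> 0" by (simp add: a_def)
  have a_meas: "\<And>i. i \<in> I \<Longrightarrow> a i \<in> borel_measurable M"
    unfolding a_def[abs_def] using meas by measurable
  have a_int: "integrable M (a i)" if "i \<in> I" for i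
  proof -
    have "integrable M (\<lambda>x. \<bar>f i x\<bar> powr p i / N i powr p i)" using intf[OF that] by simp
    then show ?thesis
      by (subst Bochner_Integration.integrable_cong[OF refl]) (auto simp: a_eq that)
  qed
  have a_integral: "(\<integral>x. a i x \<partial>M) = 1" if "i \<in> I" for i
  proof -
    have "(\<integral>x. a i x \<partial>M) = (\<integral>x. \<bar>f i x\<bar> powr p i / N i powr p i \<partial>M)"
      by (rule Bochner_Integration.integral_cong) (auto simp: a_eq that)
    also have "\<dots> = 1"
    proof -
      have "N i powr p i > 0" using Np[OF that] by simp
      then show ?thesis using NpowP[OF that] by simp
    qed
    finally show ?thesis .
  qed
  define P where "P x = (\<Prod>i\<in>I. a i x powr w i)" for x
  define G where "G x = (\<Prod>i\<in>I. a i x powr (1 / real n))" for x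
  define A where "A x = (\<Sum>i\<in>I. a i x) / real n" for x
  define SW where "SW x = (\<Sum>i\<in>I. w i * a i x)" for x
  have P_meas: "P \<in> borel_measurable M" unfolding P_def[abs_def] using a_meas by measurable
  have G_meas: "G \<in> borel_measurable M" unfolding G_def[abs_def] using a_meas by measurable
  have SW_int: "integrable M SW" unfolding SW_def[abs_def] using a_int by auto
  have A_int: "integrable M A" unfolding A_def[abs_def] using a_int by auto
  have P_int: "integrable M P"
  proof (rule Bochner_Integration.integrable_bound[OF SW_int P_meas], rule AE_I2)
    fix x
    have "P x \<le> SW x" unfolding P_def SW_def
      by (rule wamgm0[OF finI sw]) (use wp a0 in \<open>auto intro: less_imp_le\<close>)
    moreover have "P x \<ge> 0" unfolding P_def by (intro prod_nonneg) simp
    ultimately show "norm (P x) \<le> norm (SW x)" by simp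
  qed
  have G_int: "integrable M G"
  proof (rule Bochner_Integration.integrable_bound[OF A_int G_meas], rule AE_I2)
    fix x
    have "G x \<le> (\<Sum>i\<in>I. (1 / real n) * a i x)" unfolding G_def
      by (rule wamgm0[OF finI]) (use cardI a0 n1 in auto)
    also have "\<dots> = A x" by (simp add: A_def sum_divide_distrib)
    finally have "G x \<le> A x" .
    moreover have "G x \<ge> 0" unfolding G_def by (intro prod_nonneg) simp
    ultimately show "norm (G x) \<le> norm (A x)" by simp
  qed
  have SW_integral: "integral\<^sup>L M SW = 1"
    unfolding SW_def[abs_def] using a_int a_integral sw by simp
  have A_integral: "integral\<^sup>L M A = 1"
    unfolding A_def[abs_def] using a_int a_integral cardI n1 by simp
  have prodN: "(\<Prod>i\<in>I. N i) > 0" using Np by (intro prod_pos) auto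
  have Pf: "(\<Prod>i\<in>I. f i x) = (\<Prod>i\<in>I. N i) * P x" if "x \<in> space M" for x
  proof -
    have "a i x powr w i = f i x / N i" if "i \<in> I" for i
    proof -
      have pi: "p i > 0" using pp[OF that] by simp
      have "a i x powr w i = (f i x / N i) powr (p i * (1 / p i))"
        unfolding a_def w_def by (rule powr_powr)
      also have "p i * (1 / p i) = 1" using pi by simp
      also have "(f i x / N i) powr 1 = f i x / N i"
        by (rule powr_one, rule divide_nonneg_pos[OF fnn[OF that \<open>x \<in> space M\<close>] Np[OF that]])
      finally show ?thesis .
    qed
    then have "P x = (\<Prod>i\<in>I. f i x / N i)" unfolding P_def by (rule prod.cong[OF refl])
    also have "\<dots> = (\<Prod>i\<in>I. f i x) / (\<Prod>i\<in>I. N i)" by (rule prod_dividef)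
    finally have "P x = (\<Prod>i\<in>I. f i x) / (\<Prod>i\<in>I. N i)" .
    moreover have "(\<Prod>i\<in>I. N i) \<noteq> 0" using prodN by linarith
    ultimately show ?thesis by simp
  qed
  have Gf: "G x = (\<Prod>i\<in>I. f i x powr (p i / real n)) / (\<Prod>i\<in>I. N i powr (p i / real n))"
    if "x \<in> space M" for x
  proof -
    have "a i x powr (1 / real n) = f i x powr (p i / real n) / N i powr (p i / real n)" if "i \<in> I" for i
      unfolding a_def powr_powr powr_divide by simp
    then have "G x = (\<Prod>i\<in>I. f i x powr (p i / real n) / N i powr (p i / real n))"
      unfolding G_def by (rule prod.cong[OF refl])
    then show ?thesis by (simp only: prod_dividef)
  qed
  have G_integral: "integral\<^sup>L M G = R"
  proof -
    have "integral\<^sup>L M G = (\<integral>x. (\<Prod>i\<in>I. f i x powr (p i / real n)) / (\<Prod>i\<in>I. N i powr (p i / real n)) \<partial>M)"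
      by (rule Bochner_Integration.integral_cong[OF refl Gf])
    also have "\<dots> = (\<integral>x. (\<Prod>i\<in>I. f i x powr (p i / real n)) \<partial>M) / (\<Prod>i\<in>I. N i powr (p i / real n))"
      by (rule integral_divide_zero)
    finally show ?thesis unfolding R_def I_def N_def .
  qed
  have L1: "Lp_norm M 1 (\<lambda>x. \<Prod>i=1..n. f i x) = (\<Prod>i\<in>I. N i) * integral\<^sup>L M P"
  proof -
    have "(\<integral>x. \<bar>\<Prod>i=1..n. f i x\<bar> powr 1 \<partial>M) = (\<integral>x. (\<Prod>i\<in>I. N i) * P x \<partial>M)"
    proof (rule Bochner_Integration.integral_cong[OF refl])
      fix x assume x: "x \<in> space M"
      have "(\<Prod>i=1..n. f i x) \<ge> 0" using fnn x unfolding I_def by (intro prod_nonneg) auto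
      then show "\<bar>\<Prod>i=1..n. f i x\<bar> powr 1 = (\<Prod>i\<in>I. N i) * P x"
        using Pf[OF x] by (simp add: I_def)
    qed
    also have "\<dots> = (\<Prod>i\<in>I. N i) * integral\<^sup>L M P" by simp
    finally have eq: "(\<integral>x. \<bar>\<Prod>i=1..n. f i x\<bar> powr 1 \<partial>M) = (\<Prod>i\<in>I. N i) * integral\<^sup>L M P" .
    have "integral\<^sup>L M P \<ge> 0" unfolding P_def by (intro Bochner_Integration.integral_nonneg prod_nonneg) simp
    then show ?thesis unfolding Lp_norm_def eq using prodN by simp
  qed
  have wmin_le: "\<And>i. i \<in> I \<Longrightarrow> pmin_inv \<le> w i"
    unfolding pmin_inv_def w_def I_def by (intro Min_le) auto
  have wmax_ge: "\<And>i. i \<in> I \<Longrightarrow> w i \<le> pmax_inv"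
    unfolding pmax_inv_def w_def I_def by (intro Max_ge) auto
  have wmin0: "pmin_inv \<ge> 0"
  proof -
    have "pmin_inv \<in> w ` I" unfolding pmin_inv_def w_def I_def using neI[unfolded I_def]
      by (intro Min_in) auto
    then show ?thesis using wp by (auto intro: less_imp_le)
  qed
  have pw: "real n * pmin_inv * (A x - G x) \<le> SW x - P x \<and> SW x - P x \<le> real n * pmax_inv * (A x - G x)" for x
  proof -
    have "\<And>i. i \<in> I \<Longrightarrow> 0 \<le> a i x" using a0 by simp
    from refined[where a="\<lambda>i. a i x", OF finI neI sw wp this wmin_le wmin0 wmax_ge]
    show ?thesis unfolding cardI A_def G_def SW_def P_def by simp
  qed
  have i1: "integral\<^sup>L M (\<lambda>x. real n * pmin_inv * (A x - G x)) \<le> integral\<^sup>L M (\<lambda>x. SW x - P x)"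
    by (rule Bochner_Integration.integral_mono) (use A_int G_int SW_int P_int pw in auto)
  have i2: "integral\<^sup>L M (\<lambda>x. SW x - P x) \<le> integral\<^sup>L M (\<lambda>x. real n * pmax_inv * (A x - G x))"
    by (rule Bochner_Integration.integral_mono) (use A_int G_int SW_int P_int pw in auto)
  have j1: "real n * pmin_inv * (1 - R) \<le> 1 - integral\<^sup>L M P"
    using i1 A_int G_int SW_int P_int by (simp add: A_integral G_integral SW_integral)
  have j2: "1 - integral\<^sup>L M P \<le> real n * pmax_inv * (1 - R)"
    using i2 A_int G_int SW_int P_int by (simp add: A_integral G_integral SW_integral)
  have "(\<Prod>i\<in>I. N i) * (1 - real n * pmax_inv * (1 - R)) \<le> (\<Prod>i\<in>I. N i) * integral\<^sup>L M P"
    using j2 prodN by (intro mult_left_mono) auto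
  moreover have "(\<Prod>i\<in>I. N i) * integral\<^sup>L M P \<le> (\<Prod>i\<in>I. N i) * (1 - real n * pmin_inv * (1 - R))"
    using j1 prodN by (intro mult_left_mono) auto
  ultimately show ?thesis unfolding L1 by (simp add: N_def I_def)
qed

end
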